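(* Let $F:\mathbb{R}^d\to\mathbb{R}^d$ be $L$-Lipschitz, $G:\mathbb{R}^d\rightrightarrows\mathbb{R}^d$ maximally monotone, the solution set of $0\in F(x)+G(x)$ nonempty, $F+G$ maximally $\rho$-cohypomonotone with $\rho>0$, and $\eta>\rho$. Let $\alpha=1-\frac\rho\eta$, $\beta_k=\frac1{k+2}$, $R=\mathrm{Id}-J_{\eta(F+G)}$, $x^\star$ a solution, and let $(x_k)$ be random iterates with $x_{k+1}=\beta_kx_0+(1-\beta_k)((1-\alpha)x_k+\alpha\widetilde J_{\eta(F+G)}(x_k))$, where $\mathbb{E}_k\|\widetilde J_{\eta(F+G)}(x_k)-J_{\eta(F+G)}(x_k)\|^2\le\varepsilon_k^2$. Then for any $\gamma>0$ and $K\ge1$, $$\frac{\alpha K(K+1)}4\mathbb{E}\|R(x_K)\|^2\le\frac{K+1}{K\alpha}\|x^\star-x_0\|^2+\sum_{k=0}^{K-1}\left(\frac{\alpha(\gamma+1)}{2\gamma}(k+1)(k+2)\mathbb{E}[\varepsilon_k^2]+\frac{\gamma\alpha\,\mathbb{E}\|R(x_k)\|^2}2\right).$$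
   Context: For an operator $A$, $J_A=(\mathrm{Id}+A)^{-1}$. $F+G$ is $\rho$-cohypomonotone if $\langle u-v,x-y\rangle\ge-\rho\|u-v\|^2$ for all $(x,u),(y,v)$ in its graph; maximal means its graph is not strictly contained in that of another $\rho$-cohypomonotone operator. $\mathbb{E}_k$ is expectation conditioned on the randomness of $x_1,\dots,x_k$; $\varepsilon_k$ may be random and measurable with respect to that conditioning. *)

theory Defs
  imports "HOL-Analysis.Analysis" "HOL-Probability.Probability"
begin

definition monotone_op :: "('a::real_inner \<Rightarrow> 'a set) \<Rightarrow> bool" where
  "monotone_op A \<longleftrightarrow> (\<forall>x y u v. u \<in> A x \<longrightarrow> v \<in> A y \<longrightarrow> inner (u - v) (x - y) \<ge> 0)"

definition maximal_monotone_op :: "('a::real_inner \<Rightarrow> 'a set) \<Rightarrow> bool" where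
  "maximal_monotone_op A \<longleftrightarrow> monotone_op A \<and>
     (\<forall>B. monotone_op B \<and> (\<forall>x. A x \<subseteq> B x) \<longrightarrow> B = A)"

definition cohypomonotone_op :: "real \<Rightarrow> ('a::real_inner \<Rightarrow> 'a set) \<Rightarrow> bool" where
  "cohypomonotone_op \<rho> A \<longleftrightarrow>
     (\<forall>x y u v. u \<in> A x \<longrightarrow> v \<in> A y \<longrightarrow> inner (u - v) (x - y) \<ge> - \<rho> * (norm (u - v))\<^sup>2)"

definition maximal_cohypomonotone_op :: "real \<Rightarrow> ('a::real_inner \<Rightarrow> 'a set) \<Rightarrow> bool" where
  "maximal_cohypomonotone_op \<rho> A \<longleftrightarrow> cohypomonotone_op \<rho> A \<and>
     (\<forall>B. cohypomonotone_op \<rho> B \<and> (\<forall>x. A x \<subseteq> B x) \<longrightarrow> B = A)"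

definition op_plus :: "('a::real_vector \<Rightarrow> 'a) \<Rightarrow> ('a \<Rightarrow> 'a set) \<Rightarrow> ('a \<Rightarrow> 'a set)" where
  "op_plus F G = (\<lambda>x. (\<lambda>g. F x + g) ` G x)"

definition op_scale :: "real \<Rightarrow> ('a::real_vector \<Rightarrow> 'a set) \<Rightarrow> ('a \<Rightarrow> 'a set)" where
  "op_scale c A = (\<lambda>x. (\<lambda>u. c *\<^sub>R u) ` A x)"

text \<open>Resolvent J_A = (Id + A)^{-1}, read as a (single-valued) map: J_A x is the y with x \<in> y + A y.\<close>
definition resolvent :: "('a::real_vector \<Rightarrow> 'a set) \<Rightarrow> 'a \<Rightarrow> 'a" where
  "resolvent A x = (THE y. x \<in> (\<lambda>a. y + a) ` A y)"

text \<open>Sigma-algebra generated by the iterates X 0, ..., X k (the conditioning for E_k).\<close>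
definition hist :: "'w measure \<Rightarrow> (nat \<Rightarrow> 'w \<Rightarrow> 'a::topological_space) \<Rightarrow> nat \<Rightarrow> 'w measure" where
  "hist M X k = sigma (space M) (\<Union>i\<in>{..k}. {X i -` A \<inter> space M | A. A \<in> sets borel})"

end

theory Submission
  imports Defs
begin

lemma key_sum:
  fixes P :: "('a::real_inner \<times> 'a) set" and l :: "'a \<times> 'a \<Rightarrow> real"
  assumes fin: "finite P" and s1: "sum l P = 1" and nn: "\<And>p. p \<in> P \<Longrightarrow> l p \<ge> 0"
    and mono: "\<And>p q. p \<in> P \<Longrightarrow> q \<in> P \<Longrightarrow> inner (snd p - snd q) (fst p - fst q) \<ge> 0"
    and xdef: "x = (\<Sum>p\<in>P. l p *\<^sub>R fst p)"
  shows "(\<Sum>p\<in>P. l p * inner (x + snd p) (x - fst p)) \<le> 0"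
proof -
  have xu: "x - fst p = (\<Sum>q\<in>P. l q *\<^sub>R (fst q - fst p))" for p
  proof -
    have "(\<Sum>q\<in>P. l q *\<^sub>R (fst q - fst p)) = x - (\<Sum>q\<in>P. l q) *\<^sub>R fst p"
      by (simp add: xdef scaleR_diff_right sum_subtractf scaleR_sum_left)
    then show ?thesis using s1 by simp
  qed
  have A: "(\<Sum>p\<in>P. l p * inner x (x - fst p)) = 0"
  proof -
    have "(\<Sum>p\<in>P. l p * inner x (x - fst p)) = inner x (\<Sum>p\<in>P. l p *\<^sub>R (x - fst p))"
      by (simp add: inner_sum_right)
    also have "(\<Sum>p\<in>P. l p *\<^sub>R (x - fst p)) = (\<Sum>p\<in>P. l p) *\<^sub>R x - x"
      by (simp add: xdef scaleR_diff_right sum_subtractf scaleR_sum_left)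
    finally show ?thesis using s1 by simp
  qed
  define T where "T = (\<Sum>p\<in>P. \<Sum>q\<in>P. l p * l q * inner (snd p) (fst q - fst p))"
  have B: "(\<Sum>p\<in>P. l p * inner (snd p) (x - fst p)) = T"
    unfolding T_def xu by (simp add: inner_sum_right sum_distrib_left mult.assoc)
  have T2: "T = (\<Sum>p\<in>P. \<Sum>q\<in>P. l p * l q * inner (snd q) (fst p - fst q))"
    unfolding T_def by (subst sum.swap) (simp add: mult.commute)
  have "2 * T = (\<Sum>p\<in>P. \<Sum>q\<in>P. - (l p * l q * inner (snd p - snd q) (fst p - fst q)))"
    unfolding mult_2 apply (subst (2) T2) unfolding T_def
    by (simp add: sum.distrib[symmetric] inner_diff_left inner_diff_right algebra_simps)
  also have "\<dots> \<le> 0"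
    by (intro sum_nonpos) (auto intro!: mult_nonneg_nonneg nn mono)
  finally have "T \<le> 0" by simp
  have "(\<Sum>p\<in>P. l p * inner (x + snd p) (x - fst p))
      = (\<Sum>p\<in>P. l p * inner x (x - fst p)) + (\<Sum>p\<in>P. l p * inner (snd p) (x - fst p))"
    by (simp add: inner_add_left distrib_left sum.distrib)
  then show ?thesis using A B \<open>T \<le> 0\<close> by simp
qed

lemma DF_finite:
  fixes P :: "('a::euclidean_space \<times> 'a) set"
  assumes fin: "finite P" and ne: "P \<noteq> {}"
    and mono: "\<And>p q. p \<in> P \<Longrightarrow> q \<in> P \<Longrightarrow> inner (snd p - snd q) (fst p - fst q) \<ge> 0"
  shows "\<exists>x. \<forall>p\<in>P. inner (x + snd p) (x - fst p) \<le> 0"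
proof (rule ccontr)
  assume "\<not> ?thesis"
  then have ex: "\<And>x. \<exists>p\<in>P. inner (x + snd p) (x - fst p) > 0" by (auto simp: not_le)
  define psi :: "'a \<times> 'a \<Rightarrow> 'a \<Rightarrow> real" where "psi p x = max 0 (inner (x + snd p) (x - fst p))" for p x
  define S :: "'a \<Rightarrow> real" where "S x = (\<Sum>p\<in>P. psi p x)" for x
  have psi_nn: "psi p x \<ge> 0" for p x by (simp add: psi_def)
  have Spos: "S x > 0" for x
  proof -
    obtain p where p: "p \<in> P" "inner (x + snd p) (x - fst p) > 0" using ex by blast
    have "psi p x \<le> S x" unfolding S_def by (rule member_le_sum) (auto simp: psi_nn p fin)
    moreover have "psi p x > 0" using p by (simp add: psi_def)
    ultimately show ?thesis by simp
  qed
  define f where "f x = (\<Sum>p\<in>P. (psi p x / S x) *\<^sub>R fst p)" for x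
  define C where "C = convex hull (fst ` P)"
  have contpsi: "continuous_on UNIV (psi p)" for p
    unfolding psi_def by (intro continuous_intros)
  have contS: "continuous_on UNIV S"
    unfolding S_def by (intro continuous_intros contpsi)
  have contf: "continuous_on C f"
    unfolding f_def
    by (intro continuous_intros continuous_on_subset[OF contpsi] continuous_on_subset[OF contS])
       (auto simp: Spos[THEN less_imp_neq, symmetric] dest: sym)
  have sum1: "(\<Sum>p\<in>P. psi p x / S x) = 1" for x
    using Spos[of x] by (simp add: S_def sum_divide_distrib[symmetric])
  have fC: "f \<in> C \<rightarrow> C"
  proof
    fix x assume "x \<in> C"
    show "f x \<in> C" unfolding f_def C_def
      by (rule convex_sum[OF fin]) (auto simp: sum1 psi_nn Spos less_imp_le hull_inc)
  qed
  have "compact C" unfolding C_def by (rule finite_imp_compact_convex_hull) (simp add: fin)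
  moreover have "C \<noteq> {}" unfolding C_def using ne by simp
  ultimately obtain x where "x \<in> C" "f x = x"
    using brouwer[of C f] contf fC unfolding C_def by blast
  have le: "(\<Sum>p\<in>P. (psi p x / S x) * inner (x + snd p) (x - fst p)) \<le> 0"
  proof (rule key_sum[OF fin sum1])
    show "x = (\<Sum>p\<in>P. (psi p x / S x) *\<^sub>R fst p)"
      using \<open>f x = x\<close> unfolding f_def by (rule sym)
  qed (auto simp: psi_nn Spos less_imp_le mono)
  obtain p where p: "p \<in> P" "inner (x + snd p) (x - fst p) > 0" using ex by blast
  have "0 < (psi p x / S x) * inner (x + snd p) (x - fst p)"
    using p Spos[of x] by (simp add: psi_def)
  also have "\<dots> \<le> (\<Sum>p\<in>P. (psi p x / S x) * inner (x + snd p) (x - fst p))"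
  proof (rule member_le_sum)
    fix q assume "q \<in> P - {p}"
    have "0 \<le> psi q x * inner (x + snd q) (x - fst q)"
      by (cases "inner (x + snd q) (x - fst q) \<ge> 0") (auto simp: psi_def max_def)
    then show "0 \<le> psi q x / S x * inner (x + snd q) (x - fst q)"
      using Spos[of x] by simp
  qed (auto simp: fin p)
  finally show False using le by simp
qed

lemma ball_identity:
  fixes a b x :: "'a::real_inner"
  shows "4 * inner (a - x) (x - b) = (norm (a - b))\<^sup>2 - (norm (2 *\<^sub>R x - a - b))\<^sup>2"
  by (simp add: power2_norm_eq_inner inner_diff_left inner_diff_right inner_add_left inner_add_right inner_commute algebra_simps)

lemma Cset_bounded:
  fixes a b :: "'a::real_inner"
  shows "bounded {x. 0 \<le> inner (a - x) (x - b)}"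
proof -
  have "norm x \<le> (norm (a - b) + norm (a + b)) / 2" if "0 \<le> inner (a - x) (x - b)" for x
  proof -
    have sq: "(norm (2 *\<^sub>R x - a - b))\<^sup>2 \<le> (norm (a - b))\<^sup>2" using ball_identity[of a x b] that by linarith
    have "norm (2 *\<^sub>R x - a - b) \<le> norm (a - b)" by (rule power2_le_imp_le[OF sq]) simp
    moreover have "norm (2 *\<^sub>R x) \<le> norm (2 *\<^sub>R x - a - b) + norm (a + b)"
      by (metis add.commute diff_add_cancel diff_diff_eq norm_triangle_ineq)
    ultimately show ?thesis by simp
  qed
  then show ?thesis unfolding bounded_iff by blast
qed

lemma Cset_closed:
  fixes a b :: "'a::real_inner"
  shows "closed {x. 0 \<le> inner (a - x) (x - b)}"
  by (intro closed_Collect_le continuous_intros)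

lemma DF_full:
  fixes S :: "('a::euclidean_space \<times> 'a) set"
  assumes mono: "\<And>p q. p \<in> S \<Longrightarrow> q \<in> S \<Longrightarrow> inner (snd p - snd q) (fst p - fst q) \<ge> 0"
  shows "\<exists>x. \<forall>p\<in>S. inner (z - x - snd p) (x - fst p) \<ge> 0"
proof (cases "S = {}")
  case True then show ?thesis by simp
next
  case False
  have mono': "\<And>a b c d. (a,b)\<in>S \<Longrightarrow> (c,d)\<in>S \<Longrightarrow> 0 \<le> inner (b - d) (a - c)"
    using mono by force
  from False obtain p0 where p0: "p0 \<in> S" by blast
  define Cp where "Cp p = {x. 0 \<le> inner (z - snd p - x) (x - fst p)}" for p
  have "Cp p0 \<inter> (\<Inter>p\<in>S. Cp p) \<noteq> {}"
  proof (rule compact_imp_fip_image)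
    show "compact (Cp p0)" unfolding Cp_def compact_eq_bounded_closed
      using Cset_bounded Cset_closed by blast
    show "closed (Cp p)" for p unfolding Cp_def by (rule Cset_closed)
    fix I' assume I': "finite I'" "I' \<subseteq> S"
    define P where "P = (\<lambda>p. (fst p, snd p - z)) ` (insert p0 I')"
    have "\<exists>x. \<forall>p\<in>P. inner (x + snd p) (x - fst p) \<le> 0"
    proof (rule DF_finite)
      fix p q assume "p \<in> P" "q \<in> P"
      then obtain p' q' where pq: "p' \<in> insert p0 I'" "q' \<in> insert p0 I'"
        "p = (fst p', snd p' - z)" "q = (fst q', snd q' - z)" unfolding P_def by blast
      then have "p' \<in> S" "q' \<in> S" using I' p0 by auto
      then show "0 \<le> inner (snd p - snd q) (fst p - fst q)" using mono[of p' q'] pq by simp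
    qed (use I' in \<open>auto simp: P_def\<close>)
    then obtain x where x: "\<forall>p\<in>P. inner (x + snd p) (x - fst p) \<le> 0" by blast
    have "x \<in> Cp p" if "p \<in> insert p0 I'" for p
    proof -
      have "inner (x + (snd p - z)) (x - fst p) \<le> 0" using x that unfolding P_def by auto
      moreover have "z - snd p - x = - (x + (snd p - z))" by (simp add: algebra_simps)
      ultimately show ?thesis unfolding Cp_def by (simp only: mem_Collect_eq inner_minus_left)
    qed
    then show "Cp p0 \<inter> (\<Inter>p\<in>I'. Cp p) \<noteq> {}" by blast
  qed
  then obtain x where "\<forall>p\<in>S. x \<in> Cp p" by blast
  then show ?thesis unfolding Cp_def by (auto simp: algebra_simps)
qed

lemma resolvent_exists:
  fixes A :: "'a::euclidean_space \<Rightarrow> 'a set"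
  assumes mc: "maximal_cohypomonotone_op \<rho> A" and eta: "\<eta> > \<rho>"
  shows "\<exists>y. \<exists>u\<in>A y. z = y + \<eta> *\<^sub>R u"
proof -
  have ch: "cohypomonotone_op \<rho> A" and mx: "\<And>B. cohypomonotone_op \<rho> B \<Longrightarrow> (\<forall>x. A x \<subseteq> B x) \<Longrightarrow> B = A"
    using mc unfolding maximal_cohypomonotone_op_def by auto
  define c where "c = \<eta> - \<rho>"
  have c: "c > 0" using eta by (simp add: c_def)
  define S where "S = {(c *\<^sub>R w, a + \<rho> *\<^sub>R w) | a w. w \<in> A a}"
  have "\<exists>x. \<forall>p\<in>S. inner (z - x - snd p) (x - fst p) \<ge> 0"
  proof (rule DF_full)
    fix p q assume "p \<in> S" "q \<in> S"
    then obtain a w a' w' where pq: "w \<in> A a" "w' \<in> A a'" "p = (c *\<^sub>R w, a + \<rho> *\<^sub>R w)"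
      "q = (c *\<^sub>R w', a' + \<rho> *\<^sub>R w')" unfolding S_def by blast
    have h: "inner (w - w') (a - a') \<ge> - \<rho> * (norm (w - w'))\<^sup>2"
      using ch pq unfolding cohypomonotone_op_def by blast
    have e1: "snd p - snd q = (a - a') + \<rho> *\<^sub>R (w - w')" by (simp add: pq algebra_simps)
    have e2: "fst p - fst q = c *\<^sub>R (w - w')" by (simp add: pq algebra_simps)
    have "inner (snd p - snd q) (fst p - fst q) = c * inner (a - a') (w - w') + c * \<rho> * inner (w - w') (w - w')"
      unfolding e1 e2 by (simp add: inner_add_left distrib_left)
    also have "\<dots> = c * (inner (w - w') (a - a') + \<rho> * (norm (w - w'))\<^sup>2)"
      by (simp add: power2_norm_eq_inner inner_commute distrib_left)
    also have "\<dots> \<ge> 0" using h c by simp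
    finally show "inner (snd p - snd q) (fst p - fst q) \<ge> 0" .
  qed
  then obtain \<sigma> where sg: "\<forall>p\<in>S. inner (z - \<sigma> - snd p) (\<sigma> - fst p) \<ge> 0" by blast
  define s where "s = (1 / c) *\<^sub>R \<sigma>"
  have sig: "\<sigma> = c *\<^sub>R s" using c by (simp add: s_def)
  define y where "y = z - \<sigma> - \<rho> *\<^sub>R s"
  have zy: "z = y + \<eta> *\<^sub>R s" by (simp add: y_def sig c_def algebra_simps)
  define B where "B x = A x \<union> (if x = y then {s} else {})" for x
  have new: "inner (s - w) (y - a) \<ge> - \<rho> * (norm (s - w))\<^sup>2" if "w \<in> A a" for a w
  proof -
    have "(c *\<^sub>R w, a + \<rho> *\<^sub>R w) \<in> S" using that unfolding S_def by blast
    then have "inner (z - \<sigma> - (a + \<rho> *\<^sub>R w)) (\<sigma> - c *\<^sub>R w) \<ge> 0" using sg by force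
    moreover have "z - \<sigma> - (a + \<rho> *\<^sub>R w) = (y - a) + \<rho> *\<^sub>R (s - w)"
      by (simp add: y_def algebra_simps)
    moreover have "\<sigma> - c *\<^sub>R w = c *\<^sub>R (s - w)" by (simp add: sig algebra_simps)
    moreover have "inner ((y - a) + \<rho> *\<^sub>R (s - w)) (c *\<^sub>R (s - w)) = c * (inner (y - a) (s - w) + \<rho> * (norm (s - w))\<^sup>2)"
      by (simp add: inner_add_left power2_norm_eq_inner distrib_left)
    ultimately have "c * (inner (y - a) (s - w) + \<rho> * (norm (s - w))\<^sup>2) \<ge> 0"
      by metis
    then have "inner (y - a) (s - w) + \<rho> * (norm (s - w))\<^sup>2 \<ge> 0"
      using c by (simp add: zero_le_mult_iff)
    then show ?thesis by (simp add: inner_commute)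
  qed
  have "cohypomonotone_op \<rho> B"
    unfolding cohypomonotone_op_def
  proof (intro allI impI)
    fix x1 x2 u1 u2 assume u1: "u1 \<in> B x1" and u2: "u2 \<in> B x2"
    show "inner (u1 - u2) (x1 - x2) \<ge> - \<rho> * (norm (u1 - u2))\<^sup>2"
    proof (cases "u1 \<in> A x1")
      case True
      show ?thesis
      proof (cases "u2 \<in> A x2")
        case True
        then show ?thesis using \<open>u1 \<in> A x1\<close> ch unfolding cohypomonotone_op_def by blast
      next
        case False
        then have "x2 = y" "u2 = s" using u2 by (auto simp: B_def split: if_splits)
        then show ?thesis using new[OF \<open>u1 \<in> A x1\<close>]
          by (metis inner_commute inner_minus_left inner_minus_right minus_diff_eq norm_minus_commute)
      qed
    next
      case False
      then have "x1 = y" "u1 = s" using u1 by (auto simp: B_def split: if_splits)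
      show ?thesis
      proof (cases "u2 \<in> A x2")
        case True
        then show ?thesis using new[OF True] \<open>x1 = y\<close> \<open>u1 = s\<close> by simp
      next
        case False
        then have "x2 = y" "u2 = s" using u2 by (auto simp: B_def split: if_splits)
        then show ?thesis using \<open>x1 = y\<close> \<open>u1 = s\<close> by simp
      qed
    qed
  qed
  then have "B = A" by (rule mx) (auto simp: B_def)
  then have "s \<in> A y" by (metis B_def UnCI singletonI)
  then show ?thesis using zy by blast
qed

lemma resolvent_unique:
  fixes A :: "'a::real_inner \<Rightarrow> 'a set"
  assumes ch: "cohypomonotone_op \<rho> A" and eta: "\<eta> > \<rho>" and rho: "\<rho> > 0"
    and u: "u \<in> A y" and u': "u' \<in> A y'" and eq: "y + \<eta> *\<^sub>R u = y' + \<eta> *\<^sub>R u'"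
  shows "y = y'"
proof -
  have h: "inner (u - u') (y - y') \<ge> - \<rho> * (norm (u - u'))\<^sup>2"
    using ch u u' unfolding cohypomonotone_op_def by blast
  have d: "y - y' = - \<eta> *\<^sub>R (u - u')" using eq by (simp add: algebra_simps)
  have "inner (u - u') (y - y') = - \<eta> * (norm (u - u'))\<^sup>2"
    by (simp add: d power2_norm_eq_inner)
  with h have "(\<eta> - \<rho>) * (norm (u - u'))\<^sup>2 \<le> 0" by (simp add: algebra_simps)
  then have "(norm (u - u'))\<^sup>2 \<le> 0" using eta by (simp add: mult_le_0_iff)
  then have "u = u'" by simp
  then show ?thesis using d by simp
qed

lemma resolvent_prop:
  fixes A :: "'a::euclidean_space \<Rightarrow> 'a set"
  assumes mc: "maximal_cohypomonotone_op \<rho> A" and eta: "\<eta> > \<rho>" and rho: "\<rho> > 0"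
  shows "\<exists>u\<in>A (resolvent (op_scale \<eta> A) z). z = resolvent (op_scale \<eta> A) z + \<eta> *\<^sub>R u"
proof -
  have ch: "cohypomonotone_op \<rho> A" using mc unfolding maximal_cohypomonotone_op_def by auto
  have iff: "z \<in> (\<lambda>a. y + a) ` op_scale \<eta> A y \<longleftrightarrow> (\<exists>u\<in>A y. z = y + \<eta> *\<^sub>R u)" for y
    unfolding op_scale_def by auto
  have "\<exists>!y. z \<in> (\<lambda>a. y + a) ` op_scale \<eta> A y"
    unfolding iff
  proof -
    obtain y u where "u \<in> A y" "z = y + \<eta> *\<^sub>R u" using resolvent_exists[OF mc eta] by blast
    moreover have "y' = y" if h: "\<exists>u\<in>A y'. z = y' + \<eta> *\<^sub>R u" for y'
    proof -
      obtain u' where u': "u' \<in> A y'" "z = y' + \<eta> *\<^sub>R u'" using h by blast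
      show ?thesis by (rule resolvent_unique[OF ch eta rho u'(1) \<open>u \<in> A y\<close>])
         (use u'(2) \<open>z = y + \<eta> *\<^sub>R u\<close> in simp)
    qed
    ultimately show "\<exists>!y. \<exists>u\<in>A y. z = y + \<eta> *\<^sub>R u" by blast
  qed
  then have "z \<in> (\<lambda>a. resolvent (op_scale \<eta> A) z + a) ` op_scale \<eta> A (resolvent (op_scale \<eta> A) z)"
    unfolding resolvent_def by (rule theI')
  then show ?thesis unfolding iff .
qed

lemma resolvent_fix:
  fixes A :: "'a::euclidean_space \<Rightarrow> 'a set"
  assumes mc: "maximal_cohypomonotone_op \<rho> A" and eta: "\<eta> > \<rho>" and rho: "\<rho> > 0"
    and z: "0 \<in> A xs"
  shows "resolvent (op_scale \<eta> A) xs = xs"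
proof -
  have ch: "cohypomonotone_op \<rho> A" using mc unfolding maximal_cohypomonotone_op_def by auto
  obtain u where "u \<in> A (resolvent (op_scale \<eta> A) xs)" "xs = resolvent (op_scale \<eta> A) xs + \<eta> *\<^sub>R u"
    using resolvent_prop[OF mc eta rho] by blast
  then show ?thesis using resolvent_unique[OF ch eta rho, of u _ 0 xs] z by simp
qed

lemma resolvent_cocoercive:
  fixes A :: "'a::euclidean_space \<Rightarrow> 'a set"
  assumes mc: "maximal_cohypomonotone_op \<rho> A" and eta: "\<eta> > \<rho>" and rho: "\<rho> > 0"
  defines "R \<equiv> \<lambda>z. z - resolvent (op_scale \<eta> A) z"
  shows "inner (R z1 - R z2) (z1 - z2) \<ge> (1 - \<rho> / \<eta>) * (norm (R z1 - R z2))\<^sup>2"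
proof -
  have ch: "cohypomonotone_op \<rho> A" using mc unfolding maximal_cohypomonotone_op_def by auto
  obtain u1 where u1: "u1 \<in> A (resolvent (op_scale \<eta> A) z1)" "z1 = resolvent (op_scale \<eta> A) z1 + \<eta> *\<^sub>R u1"
    using resolvent_prop[OF mc eta rho] by blast
  obtain u2 where u2: "u2 \<in> A (resolvent (op_scale \<eta> A) z2)" "z2 = resolvent (op_scale \<eta> A) z2 + \<eta> *\<^sub>R u2"
    using resolvent_prop[OF mc eta rho] by blast
  have R1: "R z1 = \<eta> *\<^sub>R u1" unfolding R_def using u1(2) by (simp add: algebra_simps)
  have R2: "R z2 = \<eta> *\<^sub>R u2" unfolding R_def using u2(2) by (simp add: algebra_simps)
  have J: "resolvent (op_scale \<eta> A) z1 - resolvent (op_scale \<eta> A) z2 = (z1 - z2) - \<eta> *\<^sub>R (u1 - u2)"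
    using u1(2) u2(2) by (simp add: algebra_simps)
  have h: "inner (u1 - u2) (resolvent (op_scale \<eta> A) z1 - resolvent (op_scale \<eta> A) z2) \<ge> - \<rho> * (norm (u1 - u2))\<^sup>2"
    using ch u1(1) u2(1) unfolding cohypomonotone_op_def by blast
  then have h2: "inner (u1 - u2) (z1 - z2) \<ge> (\<eta> - \<rho>) * (norm (u1 - u2))\<^sup>2"
    unfolding J by (simp add: inner_diff_right power2_norm_eq_inner algebra_simps)
  have e: "\<eta> > 0" using eta rho by simp
  have "(1 - \<rho> / \<eta>) * (norm (R z1 - R z2))\<^sup>2 = \<eta> * ((\<eta> - \<rho>) * (norm (u1 - u2))\<^sup>2)"
  proof -
    have "norm (R z1 - R z2) = \<eta> * norm (u1 - u2)"
      unfolding R1 R2 scaleR_diff_right[symmetric] using e by simp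
    moreover have "(1 - \<rho> / \<eta>) * (\<eta> * \<eta>) = \<eta> * (\<eta> - \<rho>)"
      using e by (simp add: field_simps)
    ultimately show ?thesis by (simp add: power2_eq_square algebra_simps)
  qed
  also have "\<dots> \<le> \<eta> * inner (u1 - u2) (z1 - z2)" using h2 e by simp
  also have "\<dots> = inner (R z1 - R z2) (z1 - z2)"
    unfolding R1 R2 by (simp add: scaleR_diff_right[symmetric])
  finally show ?thesis .
qed

lemma step_real:
  fixes n \<alpha> bd' bd ad' ad bb ab aa ee be ae :: real
  assumes n: "n > 0" and a: "\<alpha> \<ge> 0"
    and F1: "bd' - bd - ad' + ad \<ge> \<alpha> * (bb - 2 * ab + aa)"
    and E2a: "(n + 1) * ad' = n * ad - \<alpha> * n * aa + \<alpha> * n * ae"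
    and E2b: "(n + 1) * bd' = n * bd - \<alpha> * n * ab + \<alpha> * n * be"
    and F3: "bb + aa + ee - 2 * ab - 2 * be + 2 * ae \<ge> 0"
  shows "(n + 1) * bd' + \<alpha> * n * (n + 1) / 2 * bb \<le> n * ad + \<alpha> * (n - 1) * n / 2 * aa + \<alpha> * n * (n + 1) / 2 * ee + \<alpha> * n * ae"
proof -
  define P1 where "P1 = bd' - bd - ad' + ad - \<alpha> * (bb - 2 * ab + aa)"
  define Q2a where "Q2a = n * ad - \<alpha> * n * aa + \<alpha> * n * ae - (n + 1) * ad'"
  define Q2b where "Q2b = n * bd - \<alpha> * n * ab + \<alpha> * n * be - (n + 1) * bd'"
  define P3 where "P3 = bb + aa + ee - 2 * ab - 2 * be + 2 * ae"
  have id: "n * ad + \<alpha> * (n - 1) * n / 2 * aa + \<alpha> * n * (n + 1) / 2 * ee + \<alpha> * n * ae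
      - ((n + 1) * bd' + \<alpha> * n * (n + 1) / 2 * bb)
     = n * (n + 1) * P1 - n * Q2a + (n + 1) * Q2b + \<alpha> * n * (n + 1) / 2 * P3"
    unfolding P1_def Q2a_def Q2b_def P3_def by (simp add: field_simps) (simp add: algebra_simps)?
  have "Q2a = 0" "Q2b = 0" using E2a E2b by (simp_all add: Q2a_def Q2b_def)
  moreover have "P1 \<ge> 0" "P3 \<ge> 0" using F1 F3 by (simp_all add: P1_def P3_def)
  ultimately have "n * (n + 1) * P1 - n * Q2a + (n + 1) * Q2b + \<alpha> * n * (n + 1) / 2 * P3 \<ge> 0"
    using n a by simp
  then show ?thesis using id by linarith
qed

lemma step_vec:
  fixes a b e d d' :: "'a::real_inner" and n \<alpha> :: real
  assumes n: "n > 0" and a: "\<alpha> \<ge> 0"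
    and coco: "inner (b - a) (d' - d) \<ge> \<alpha> * (norm (b - a))\<^sup>2"
    and rel: "(n + 1) *\<^sub>R d' = n *\<^sub>R (d - \<alpha> *\<^sub>R a + \<alpha> *\<^sub>R e)"
  shows "(n + 1) * inner b d' + \<alpha> * n * (n + 1) / 2 * (norm b)\<^sup>2
     \<le> n * inner a d + \<alpha> * (n - 1) * n / 2 * (norm a)\<^sup>2 + \<alpha> * n * (n + 1) / 2 * (norm e)\<^sup>2 + \<alpha> * n * inner a e"
proof -
  have F1: "inner b d' - inner b d - inner a d' + inner a d \<ge> \<alpha> * (inner b b - 2 * inner a b + inner a a)"
    using coco by (simp add: power2_norm_eq_inner inner_diff_left inner_diff_right inner_commute algebra_simps)
  have "inner a ((n + 1) *\<^sub>R d') = inner a (n *\<^sub>R (d - \<alpha> *\<^sub>R a + \<alpha> *\<^sub>R e))" using rel by simp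
  then have E2a: "(n + 1) * inner a d' = n * inner a d - \<alpha> * n * inner a a + \<alpha> * n * inner a e"
    by (simp add: inner_diff_right inner_add_right algebra_simps)
  have "inner b ((n + 1) *\<^sub>R d') = inner b (n *\<^sub>R (d - \<alpha> *\<^sub>R a + \<alpha> *\<^sub>R e))" using rel by simp
  then have E2b: "(n + 1) * inner b d' = n * inner b d - \<alpha> * n * inner a b + \<alpha> * n * inner b e"
    by (simp add: inner_diff_right inner_add_right inner_commute algebra_simps)
  have "0 \<le> inner (b - a - e) (b - a - e)" by simp
  then have F3: "inner b b + inner a a + inner e e - 2 * inner a b - 2 * inner b e + 2 * inner a e \<ge> 0"
    by (simp add: inner_diff_left inner_diff_right inner_commute algebra_simps)
  show ?thesis using step_real[OF n a F1 E2a E2b F3] by (simp add: power2_norm_eq_inner)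
qed

lemma young_ae:
  fixes a e :: "'a::real_inner" and n \<gamma> :: real
  assumes g: "\<gamma> > 0"
  shows "n * inner a e \<le> \<gamma> / 2 * (norm a)\<^sup>2 + n\<^sup>2 / (2 * \<gamma>) * (norm e)\<^sup>2"
proof -
  have "0 \<le> inner (\<gamma> *\<^sub>R a - n *\<^sub>R e) (\<gamma> *\<^sub>R a - n *\<^sub>R e)" by simp
  then have "2 * \<gamma> * (n * inner a e) \<le> \<gamma>\<^sup>2 * inner a a + n\<^sup>2 * inner e e"
    by (simp add: inner_diff_left inner_diff_right inner_commute power2_eq_square algebra_simps)
  then have "n * inner a e \<le> (\<gamma>\<^sup>2 * inner a a + n\<^sup>2 * inner e e) / (2 * \<gamma>)"
    using g by (simp add: pos_le_divide_eq algebra_simps)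
  also have "\<dots> = \<gamma> / 2 * inner a a + n\<^sup>2 / (2 * \<gamma>) * inner e e"
    using g by (simp add: field_simps power2_eq_square)
  finally show ?thesis by (simp add: power2_norm_eq_inner)
qed

lemma pathwise:
  fixes x r e :: "nat \<Rightarrow> 'a::real_inner" and x0 xs :: 'a and \<alpha> \<gamma> :: real and K :: nat
  assumes a: "\<alpha> > 0" and g: "\<gamma> > 0" and K: "K \<ge> 1"
    and x0: "x 0 = x0"
    and step: "\<And>k. x (Suc k) = (1 / (real k + 2)) *\<^sub>R x0 + (1 - 1 / (real k + 2)) *\<^sub>R (x k - \<alpha> *\<^sub>R r k + \<alpha> *\<^sub>R e k)"
    and coco: "\<And>k. inner (r (Suc k) - r k) (x (Suc k) - x k) \<ge> \<alpha> * (norm (r (Suc k) - r k))\<^sup>2"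
    and star: "inner (r K) (x K - xs) \<ge> 0"
  shows "\<alpha> * real K * (real K + 1) / 4 * (norm (r K))\<^sup>2
     \<le> (real K + 1) / (real K * \<alpha>) * (norm (xs - x0))\<^sup>2
       + (\<Sum>k<K. \<alpha> * (\<gamma> + 1) / (2 * \<gamma>) * (real k + 1) * (real k + 2) * (norm (e k))\<^sup>2
                 + \<gamma> * \<alpha> / 2 * (norm (r k))\<^sup>2)"
proof -
  define V where "V k = (real k + 1) * inner (r k) (x k - x0) + \<alpha> * real k * (real k + 1) / 2 * (norm (r k))\<^sup>2" for k
  define w where "w k = \<alpha> * (\<gamma> + 1) / (2 * \<gamma>) * (real k + 1) * (real k + 2) * (norm (e k))\<^sup>2
                 + \<gamma> * \<alpha> / 2 * (norm (r k))\<^sup>2" for k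
  have Vstep: "V (Suc k) \<le> V k + w k" for k
  proof -
    define n where "n = real k + 1"
    have n: "n > 0" by (simp add: n_def)
    have rel: "(n + 1) *\<^sub>R (x (Suc k) - x0) = n *\<^sub>R ((x k - x0) - \<alpha> *\<^sub>R r k + \<alpha> *\<^sub>R e k)"
    proof -
      have c1: "(n + 1) * (1 / (real k + 2)) = 1" and c2: "(n + 1) * (1 - 1 / (real k + 2)) = n"
        by (simp_all add: n_def field_simps)
      have "(n + 1) *\<^sub>R x (Suc k) = ((n + 1) * (1 / (real k + 2))) *\<^sub>R x0
          + ((n + 1) * (1 - 1 / (real k + 2))) *\<^sub>R (x k - \<alpha> *\<^sub>R r k + \<alpha> *\<^sub>R e k)"
        unfolding step scaleR_add_right[of "n + 1"] scaleR_scaleR by (rule refl)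
      then have "(n + 1) *\<^sub>R x (Suc k) = x0 + n *\<^sub>R (x k - \<alpha> *\<^sub>R r k + \<alpha> *\<^sub>R e k)"
        unfolding c1 c2 by simp
      then show ?thesis by (simp add: algebra_simps)
    qed
    have coco': "inner (r (Suc k) - r k) ((x (Suc k) - x0) - (x k - x0)) \<ge> \<alpha> * (norm (r (Suc k) - r k))\<^sup>2"
      using coco[of k] by simp
    have sv: "(n + 1) * inner (r (Suc k)) (x (Suc k) - x0) + \<alpha> * n * (n + 1) / 2 * (norm (r (Suc k)))\<^sup>2
     \<le> n * inner (r k) (x k - x0) + \<alpha> * (n - 1) * n / 2 * (norm (r k))\<^sup>2 + \<alpha> * n * (n + 1) / 2 * (norm (e k))\<^sup>2 + \<alpha> * n * inner (r k) (e k)"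
      by (rule step_vec[OF n _ coco' rel]) (use a in simp)
    have yg: "n * inner (r k) (e k) \<le> \<gamma> / 2 * (norm (r k))\<^sup>2 + n\<^sup>2 / (2 * \<gamma>) * (norm (e k))\<^sup>2"
      by (rule young_ae[OF g])
    have c: "n * (n + 1) / 2 + n\<^sup>2 / (2 * \<gamma>) \<le> (\<gamma> + 1) / (2 * \<gamma>) * n * (n + 1)"
      using g n by (simp add: field_simps power2_eq_square)
    have "\<alpha> * n * (n + 1) / 2 * (norm (e k))\<^sup>2 + \<alpha> * n * inner (r k) (e k)
       \<le> \<alpha> * (n * (n + 1) / 2 + n\<^sup>2 / (2 * \<gamma>)) * (norm (e k))\<^sup>2 + \<alpha> * (\<gamma> / 2) * (norm (r k))\<^sup>2"
      using mult_left_mono[OF yg, of \<alpha>] a by (simp add: algebra_simps)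
    also have "\<dots> \<le> \<alpha> * ((\<gamma> + 1) / (2 * \<gamma>) * n * (n + 1)) * (norm (e k))\<^sup>2 + \<alpha> * (\<gamma> / 2) * (norm (r k))\<^sup>2"
      using c a by (intro add_right_mono mult_right_mono mult_left_mono) auto
    finally have "\<alpha> * n * (n + 1) / 2 * (norm (e k))\<^sup>2 + \<alpha> * n * inner (r k) (e k) \<le> w k"
      unfolding w_def n_def by (simp add: algebra_simps)
    then show ?thesis using sv unfolding V_def n_def by (simp add: algebra_simps)
  qed
  have V0: "V 0 = 0" by (simp add: V_def x0)
  have VK: "V m \<le> (\<Sum>k<m. w k)" for m
  proof (induction m)
    case 0 then show ?case using V0 by simp
  next
    case (Suc m) then show ?case using Vstep[of m] by simp
  qed
  define t where "t = norm (r K)"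
  define D where "D = norm (xs - x0)"
  have "inner (r K) (x K - x0) = inner (r K) (x K - xs) + inner (r K) (xs - x0)"
    by (simp add: inner_diff_right)
  moreover have "inner (r K) (xs - x0) \<ge> - (t * D)"
    using Cauchy_Schwarz_ineq2[of "r K" "xs - x0"] unfolding t_def D_def by linarith
  ultimately have ip: "inner (r K) (x K - x0) \<ge> - (t * D)" using star by linarith
  have Kp: "real K > 0" using K by simp
  have yk: "t * D \<le> \<alpha> * real K / 4 * t\<^sup>2 + D\<^sup>2 / (\<alpha> * real K)"
  proof -
    have "0 \<le> (\<alpha> * real K * t / 2 - D)\<^sup>2" by simp
    then have h: "(\<alpha> * real K) * (t * D) \<le> (\<alpha> * real K)\<^sup>2 / 4 * t\<^sup>2 + D\<^sup>2"
      by (simp add: power2_eq_square algebra_simps)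
    have aK: "\<alpha> * real K > 0" using a Kp by simp
    have "t * D \<le> ((\<alpha> * real K)\<^sup>2 / 4 * t\<^sup>2 + D\<^sup>2) / (\<alpha> * real K)"
      using h aK by (simp add: pos_le_divide_eq mult.commute)
    also have "\<dots> = \<alpha> * real K / 4 * t\<^sup>2 + D\<^sup>2 / (\<alpha> * real K)"
      using a Kp by (simp add: field_simps power2_eq_square)
    finally show ?thesis .
  qed
  have "\<alpha> * real K * (real K + 1) / 2 * t\<^sup>2 - (real K + 1) * (t * D) \<le> V K"
  proof -
    have "(real K + 1) * (- (t * D)) \<le> (real K + 1) * inner (r K) (x K - x0)"
      by (rule mult_left_mono[OF ip]) simp
    then show ?thesis unfolding V_def t_def[symmetric] by simp
  qed
  also have "\<dots> \<le> (\<Sum>k<K. w k)" by (rule VK)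
  finally have "\<alpha> * real K * (real K + 1) / 2 * t\<^sup>2 \<le> (real K + 1) * (t * D) + (\<Sum>k<K. w k)" by simp
  moreover have "(real K + 1) * (t * D) \<le> (real K + 1) * (\<alpha> * real K / 4 * t\<^sup>2 + D\<^sup>2 / (\<alpha> * real K))"
    using yk by simp
  ultimately have P: "\<alpha> * real K * (real K + 1) / 2 * t\<^sup>2 \<le> (real K + 1) * (\<alpha> * real K / 4 * t\<^sup>2) + (real K + 1) * (D\<^sup>2 / (\<alpha> * real K)) + (\<Sum>k<K. w k)"
    using distrib_left[of "real K + 1" "\<alpha> * real K / 4 * t\<^sup>2" "D\<^sup>2 / (\<alpha> * real K)"] by linarith
  have eqQ: "(real K + 1) * (\<alpha> * real K / 4 * t\<^sup>2) = (\<alpha> * real K * (real K + 1) / 2 * t\<^sup>2) / 2"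
    by (simp add: field_simps)
  have eqE: "(real K + 1) * (D\<^sup>2 / (\<alpha> * real K)) = (real K + 1) / (real K * \<alpha>) * D\<^sup>2"
    by (simp add: field_simps)
  have eqL: "\<alpha> * real K * (real K + 1) / 4 * t\<^sup>2 = (\<alpha> * real K * (real K + 1) / 2 * t\<^sup>2) / 2"
    by (simp add: field_simps)
  have "\<alpha> * real K * (real K + 1) / 4 * t\<^sup>2 \<le> (real K + 1) / (real K * \<alpha>) * D\<^sup>2 + (\<Sum>k<K. w k)"
    using P unfolding eqQ eqE eqL by linarith
  then show ?thesis unfolding w_def t_def D_def .
qed

lemma R_lipschitz:
  fixes R :: "'a::real_inner \<Rightarrow> 'a"
  assumes a: "\<alpha> > 0" and coco: "\<And>z1 z2. inner (R z1 - R z2) (z1 - z2) \<ge> \<alpha> * (norm (R z1 - R z2))\<^sup>2"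
  shows "norm ((z1 - R z1) - (z2 - R z2)) \<le> (1 + 1 / \<alpha>) * norm (z1 - z2)"
proof -
  have h: "\<alpha> * (norm (R z1 - R z2))\<^sup>2 \<le> norm (R z1 - R z2) * norm (z1 - z2)"
    using coco[of z1 z2] Cauchy_Schwarz_ineq2[of "R z1 - R z2" "z1 - z2"] by linarith
  have r: "norm (R z1 - R z2) \<le> norm (z1 - z2) / \<alpha>"
  proof (cases "norm (R z1 - R z2) = 0")
    case True then show ?thesis using a by simp
  next
    case False
    then have p: "norm (R z1 - R z2) > 0" by simp
    from h have "norm (R z1 - R z2) * (\<alpha> * norm (R z1 - R z2)) \<le> norm (R z1 - R z2) * norm (z1 - z2)"
      by (simp add: power2_eq_square algebra_simps)
    then have "\<alpha> * norm (R z1 - R z2) \<le> norm (z1 - z2)" using p by simp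
    then show ?thesis using a by (simp add: pos_le_divide_eq mult.commute)
  qed
  have "norm ((z1 - R z1) - (z2 - R z2)) \<le> norm (z1 - z2) + norm (R z1 - R z2)"
  proof -
    have "(z1 - R z1) - (z2 - R z2) = (z1 - z2) - (R z1 - R z2)" by (simp add: algebra_simps)
    then show ?thesis by (simp only:) (rule norm_triangle_ineq4)
  qed
  also have "\<dots> \<le> norm (z1 - z2) + norm (z1 - z2) / \<alpha>" using r by simp
  finally show ?thesis by (simp add: distrib_right)
qed

theorem lemmaC3:
  fixes F :: "'a::euclidean_space \<Rightarrow> 'a" and G :: "'a \<Rightarrow> 'a set"
    and L \<rho> \<eta> \<alpha> \<gamma> :: real and \<beta> :: "nat \<Rightarrow> real"
    and M :: "'w measure" and x :: "nat \<Rightarrow> 'w \<Rightarrow> 'a" and Jt :: "nat \<Rightarrow> 'w \<Rightarrow> 'a"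
    and \<epsilon> :: "nat \<Rightarrow> 'w \<Rightarrow> real" and x0 xstar :: 'a and K :: nat
  assumes lip: "L-lipschitz_on UNIV F"
    and G_mm: "maximal_monotone_op G"
    and sol_ne: "\<exists>z. 0 \<in> op_plus F G z"
    and cohypo: "maximal_cohypomonotone_op \<rho> (op_plus F G)"
    and rho_pos: "\<rho> > 0"
    and eta: "\<eta> > \<rho>"
    and alpha_def: "\<alpha> = 1 - \<rho> / \<eta>"
    and beta_def: "\<And>k. \<beta> k = 1 / (real k + 2)"
    and xstar: "0 \<in> op_plus F G xstar"
    and P: "prob_space M"
    and x_meas: "\<And>k. x k \<in> borel_measurable M"
    and x_init: "\<And>w. w \<in> space M \<Longrightarrow> x 0 w = x0"
    and iter: "\<And>k w. w \<in> space M \<Longrightarrow>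
        x (Suc k) w = \<beta> k *\<^sub>R x0 + (1 - \<beta> k) *\<^sub>R
           ((1 - \<alpha>) *\<^sub>R x k w + \<alpha> *\<^sub>R Jt k w)"
    and Jt_meas: "\<And>k. Jt k \<in> borel_measurable M"
    and eps_meas: "\<And>k. \<epsilon> k \<in> borel_measurable (hist M x k)"
    and err: "\<And>k. AE w in M.
        nn_cond_exp M (hist M x k)
          (\<lambda>w. ennreal ((norm (Jt k w - resolvent (op_scale \<eta> (op_plus F G)) (x k w)))\<^sup>2)) w
        \<le> ennreal ((\<epsilon> k w)\<^sup>2)"
    and gamma: "\<gamma> > 0"
    and K: "K \<ge> 1"
  shows "ennreal (\<alpha> * real K * (real K + 1) / 4) *
           (\<integral>\<^sup>+ w. ennreal ((norm (x K w - resolvent (op_scale \<eta> (op_plus F G)) (x K w)))\<^sup>2) \<partial>M)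
         \<le> ennreal ((real K + 1) / (real K * \<alpha>) * (norm (xstar - x0))\<^sup>2)
           + (\<Sum>k<K. ennreal (\<alpha> * (\<gamma> + 1) / (2 * \<gamma>) * (real k + 1) * (real k + 2)) *
                       (\<integral>\<^sup>+ w. ennreal ((\<epsilon> k w)\<^sup>2) \<partial>M)
                    + ennreal (\<gamma> * \<alpha> / 2) *
                       (\<integral>\<^sup>+ w. ennreal ((norm (x k w - resolvent (op_scale \<eta> (op_plus F G)) (x k w)))\<^sup>2) \<partial>M))"
proof -
  interpret P: prob_space M by (rule P)
  define A where "A = op_plus F G"
  define Jr where "Jr = resolvent (op_scale \<eta> A)"
  define R where "R z = z - Jr z" for z
  have mc: "maximal_cohypomonotone_op \<rho> A" using cohypo by (simp add: A_def)
  have e: "\<eta> > 0" using eta rho_pos by simp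
  have a: "\<alpha> > 0" using eta e rho_pos by (simp add: alpha_def field_simps)
  have coco: "inner (R z1 - R z2) (z1 - z2) \<ge> \<alpha> * (norm (R z1 - R z2))\<^sup>2" for z1 z2
    using resolvent_cocoercive[OF mc eta rho_pos, of z1 z2] unfolding R_def Jr_def alpha_def by simp
  have Rs: "R xstar = 0"
    using resolvent_fix[OF mc eta rho_pos] xstar unfolding R_def Jr_def A_def by simp
  have JR: "Jr z = z - R z" for z by (simp add: R_def)
  have lipJ: "(1 + 1 / \<alpha>)-lipschitz_on UNIV Jr"
  proof (rule lipschitz_onI)
    fix z1 z2 :: 'a
    show "dist (Jr z1) (Jr z2) \<le> (1 + 1 / \<alpha>) * dist z1 z2"
      unfolding dist_norm JR using R_lipschitz[OF a coco] by blast
  qed (use a in simp)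
  have Jmeas[measurable]: "Jr \<in> borel_measurable borel"
    by (rule borel_measurable_continuous_onI) (rule lipschitz_on_continuous_on[OF lipJ])
  define nK where "nK w = (norm (x K w - Jr (x K w)))\<^sup>2" for w
  define ne where "ne k w = (norm (Jt k w - Jr (x k w)))\<^sup>2" for k w
  define nr where "nr k w = (norm (x k w - Jr (x k w)))\<^sup>2" for k w
  define ak where "ak k = \<alpha> * (\<gamma> + 1) / (2 * \<gamma>) * (real k + 1) * (real k + 2)" for k :: nat
  define b where "b = \<gamma> * \<alpha> / 2"
  define c1 where "c1 = \<alpha> * real K * (real K + 1) / 4"
  define C where "C = (real K + 1) / (real K * \<alpha>) * (norm (xstar - x0))\<^sup>2"
  have ak_nn: "ak k \<ge> 0" for k using a gamma by (simp add: ak_def)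
  have b_nn: "b \<ge> 0" using a gamma by (simp add: b_def)
  have c1_nn: "c1 \<ge> 0" using a by (simp add: c1_def)
  have C_nn: "C \<ge> 0" using a K by (simp add: C_def)
  have path: "c1 * nK w \<le> C + (\<Sum>k<K. ak k * ne k w + b * nr k w)" if w: "w \<in> space M" for w
  proof -
    have st: "x (Suc k) w = (1 / (real k + 2)) *\<^sub>R x0 + (1 - 1 / (real k + 2)) *\<^sub>R
        (x k w - \<alpha> *\<^sub>R R (x k w) + \<alpha> *\<^sub>R (Jt k w - Jr (x k w)))" for k
    proof -
      have "(1 - \<alpha>) *\<^sub>R x k w + \<alpha> *\<^sub>R Jt k w = x k w - \<alpha> *\<^sub>R R (x k w) + \<alpha> *\<^sub>R (Jt k w - Jr (x k w))"
        by (simp add: R_def algebra_simps)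
      then show ?thesis using iter[OF w, of k] beta_def[of k] by simp
    qed
    have star: "inner (R (x K w)) (x K w - xstar) \<ge> 0"
    proof -
      have "0 \<le> \<alpha> * (norm (R (x K w)))\<^sup>2" using a by simp
      moreover have "inner (R (x K w) - R xstar) (x K w - xstar) \<ge> \<alpha> * (norm (R (x K w) - R xstar))\<^sup>2"
        by (rule coco)
      ultimately show ?thesis unfolding Rs by simp
    qed
    have "\<alpha> * real K * (real K + 1) / 4 * (norm (R (x K w)))\<^sup>2
     \<le> (real K + 1) / (real K * \<alpha>) * (norm (xstar - x0))\<^sup>2
       + (\<Sum>k<K. \<alpha> * (\<gamma> + 1) / (2 * \<gamma>) * (real k + 1) * (real k + 2) * (norm (Jt k w - Jr (x k w)))\<^sup>2
                 + \<gamma> * \<alpha> / 2 * (norm (R (x k w)))\<^sup>2)"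
      by (rule pathwise[where x="\<lambda>k. x k w" and r="\<lambda>k. R (x k w)" and e="\<lambda>k. Jt k w - Jr (x k w)", OF a gamma K x_init[OF w] st coco star])
    then show ?thesis unfolding c1_def C_def ak_def b_def nK_def ne_def nr_def R_def by simp
  qed
  note x_meas[measurable] Jt_meas[measurable]
  have mK[measurable]: "(\<lambda>w. ennreal (nK w)) \<in> borel_measurable M" unfolding nK_def by measurable
  have me[measurable]: "(\<lambda>w. ennreal (ne k w)) \<in> borel_measurable M" for k unfolding ne_def by measurable
  have mr[measurable]: "(\<lambda>w. ennreal (nr k w)) \<in> borel_measurable M" for k unfolding nr_def by measurable
  have errint: "(\<integral>\<^sup>+ w. ennreal (ne k w) \<partial>M) \<le> (\<integral>\<^sup>+ w. ennreal ((\<epsilon> k w)\<^sup>2) \<partial>M)" for k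
  proof -
    define Sg where "Sg = (\<Union>i\<in>{..k}. {x i -` B \<inter> space M | B. B \<in> sets borel})"
    have SgP: "Sg \<subseteq> Pow (space M)" unfolding Sg_def by auto
    have SgM: "Sg \<subseteq> sets M" unfolding Sg_def using measurable_sets[OF x_meas] by blast
    have sub: "subalgebra M (hist M x k)"
      unfolding subalgebra_def hist_def Sg_def[symmetric]
      using sets.sigma_sets_subset[OF SgM] SgP by (simp add: sets_measure_of space_measure_of_conv)
    have "finite_measure_subalgebra M (hist M x k)"
      unfolding finite_measure_subalgebra_def finite_measure_subalgebra_axioms_def
      using P.finite_measure_axioms sub by simp
    then interpret S: sigma_finite_subalgebra M "hist M x k"
      by (rule finite_measure_subalgebra_is_sigma_finite)
    have "(\<integral>\<^sup>+ w. ennreal (ne k w) \<partial>M) = (\<integral>\<^sup>+ w. 1 * ennreal (ne k w) \<partial>M)" by simp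
    also have "\<dots> = (\<integral>\<^sup>+ w. 1 * nn_cond_exp M (hist M x k) (\<lambda>w. ennreal (ne k w)) w \<partial>M)"
      by (rule S.nn_cond_exp_intg[symmetric]) auto
    also have "\<dots> \<le> (\<integral>\<^sup>+ w. ennreal ((\<epsilon> k w)\<^sup>2) \<partial>M)"
      using err[of k] unfolding ne_def Jr_def A_def by (auto intro!: nn_integral_mono_AE)
    finally show ?thesis .
  qed
  have "ennreal c1 * (\<integral>\<^sup>+ w. ennreal (nK w) \<partial>M) = (\<integral>\<^sup>+ w. ennreal c1 * ennreal (nK w) \<partial>M)"
    by (rule nn_integral_cmult[symmetric]) measurable
  also have "\<dots> = (\<integral>\<^sup>+ w. ennreal (c1 * nK w) \<partial>M)"
    by (simp add: ennreal_mult' c1_nn)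
  also have "\<dots> \<le> (\<integral>\<^sup>+ w. ennreal (C + (\<Sum>k<K. ak k * ne k w + b * nr k w)) \<partial>M)"
    by (rule nn_integral_mono) (auto intro: ennreal_leI path)
  also have "\<dots> = (\<integral>\<^sup>+ w. ennreal C + (\<Sum>k<K. ennreal (ak k) * ennreal (ne k w) + ennreal b * ennreal (nr k w)) \<partial>M)"
  proof (rule nn_integral_cong)
    fix w
    have t: "ak k * ne k w + b * nr k w \<ge> 0" for k
      using ak_nn b_nn by (simp add: ne_def nr_def)
    have "ennreal (C + (\<Sum>k<K. ak k * ne k w + b * nr k w)) = ennreal C + ennreal (\<Sum>k<K. ak k * ne k w + b * nr k w)"
      using C_nn t by (simp add: ennreal_plus sum_nonneg)
    also have "ennreal (\<Sum>k<K. ak k * ne k w + b * nr k w) = (\<Sum>k<K. ennreal (ak k * ne k w + b * nr k w))"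
      by (rule sum_ennreal[symmetric]) (use t in auto)
    also have "\<dots> = (\<Sum>k<K. ennreal (ak k) * ennreal (ne k w) + ennreal b * ennreal (nr k w))"
      using ak_nn b_nn by (intro sum.cong refl) (simp add: ennreal_plus ennreal_mult' ne_def nr_def)
    finally show "ennreal (C + (\<Sum>k<K. ak k * ne k w + b * nr k w)) = ennreal C + (\<Sum>k<K. ennreal (ak k) * ennreal (ne k w) + ennreal b * ennreal (nr k w))" .
  qed
  also have "\<dots> = ennreal C + (\<Sum>k<K. ennreal (ak k) * (\<integral>\<^sup>+ w. ennreal (ne k w) \<partial>M) + ennreal b * (\<integral>\<^sup>+ w. ennreal (nr k w) \<partial>M))"
  proof -
    have "(\<integral>\<^sup>+ w. ennreal C + (\<Sum>k<K. ennreal (ak k) * ennreal (ne k w) + ennreal b * ennreal (nr k w)) \<partial>M)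
        = (\<integral>\<^sup>+ w. ennreal C \<partial>M) + (\<integral>\<^sup>+ w. (\<Sum>k<K. ennreal (ak k) * ennreal (ne k w) + ennreal b * ennreal (nr k w)) \<partial>M)"
      by (rule nn_integral_add) measurable
    also have "(\<integral>\<^sup>+ w. ennreal C \<partial>M) = ennreal C" by (simp add: P.emeasure_space_1)
    also have "(\<integral>\<^sup>+ w. (\<Sum>k<K. ennreal (ak k) * ennreal (ne k w) + ennreal b * ennreal (nr k w)) \<partial>M)
        = (\<Sum>k<K. (\<integral>\<^sup>+ w. ennreal (ak k) * ennreal (ne k w) + ennreal b * ennreal (nr k w) \<partial>M))"
      by (rule nn_integral_sum) measurable
    also have "\<dots> = (\<Sum>k<K. ennreal (ak k) * (\<integral>\<^sup>+ w. ennreal (ne k w) \<partial>M) + ennreal b * (\<integral>\<^sup>+ w. ennreal (nr k w) \<partial>M))"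
    proof (rule sum.cong[OF refl])
      fix k
      show "(\<integral>\<^sup>+ w. ennreal (ak k) * ennreal (ne k w) + ennreal b * ennreal (nr k w) \<partial>M)
          = ennreal (ak k) * (\<integral>\<^sup>+ w. ennreal (ne k w) \<partial>M) + ennreal b * (\<integral>\<^sup>+ w. ennreal (nr k w) \<partial>M)"
        by (subst nn_integral_add) (measurable, simp add: nn_integral_cmult)
    qed
    finally show ?thesis .
  qed
  also have "\<dots> \<le> ennreal C + (\<Sum>k<K. ennreal (ak k) * (\<integral>\<^sup>+ w. ennreal ((\<epsilon> k w)\<^sup>2) \<partial>M) + ennreal b * (\<integral>\<^sup>+ w. ennreal (nr k w) \<partial>M))"
    by (intro add_left_mono sum_mono add_right_mono mult_left_mono errint) simp
  finally show ?thesis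
    unfolding c1_def C_def ak_def b_def nK_def nr_def Jr_def A_def .
qed

end
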